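(* Let $\theta_t f(x)=\int k_t(x,y)f(y)\,\mathrm{d}y$, $t>0$, be integral operators whose kernels satisfy, for constants $C>0$, $\alpha\in(0,1]$ and all $x,y,x',y'\in\mathbb{R}^d$, $t>0$: $|k_t(x,y)|\le C\,t^\alpha(t+|x-y|)^{-\alpha-d}$ and $|k_t(x,y)-k_t(x',y')|\le C(|x-x'|^\alpha+|y-y'|^\alpha)(t+|x-y|)^{-\alpha-d}$ whenever $|x-x'|+|y-y'|<t$. Let $\mathcal{D}$ be a dyadic grid, $r\in\mathbb{N}$, and let $P,R\in\mathcal{D}$ with $R$ $r$-good. Suppose that either (1) $\ell P\ge\ell R$ and $P,R$ are disjoint, or (2) $\ell P<\ell R$. Then for every locally integrable $f$ and every $(x,t)\in W_R:=R\times[\ell R/2,\ell R)$, \[ |\theta_t(\Delta_Pf)(x)|\lesssim\frac{(\sqrt{\ell R\,\ell P})^\alpha}{D(R,P)^{\alpha+d}}\|\Delta_Pf\|_{L^1}, \] where the implicit constant depends only on $C,\alpha,d,r$.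
   Context: $\mathbb{R}^d$ carries the $\ell^\infty$ metric $|x|=\max_i|x_i|$; $\operatorname{d}(P,R)$ is the distance between sets and $D(P,R)=\ell P+\operatorname{d}(P,R)+\ell R$. A dyadic grid is either the standard grid $\mathcal{D}^0=\bigcup_j\{2^{-j}([0,1)^d+m):m\in\mathbb{Z}^d\}$ or a translate $\mathcal{D}^\omega=\{R+\sum_{i>j}\omega_i2^{-i}: R\in\mathcal{D}^0,\ \ell R=2^{-j}\}$ for $\omega=(\omega_i)_{i\in\mathbb{Z}}\in(\{0,1\}^d)^{\mathbb{Z}}$. For $P\in\mathcal{D}$, $\Delta_Pf=\sum_{J}(\langle f\rangle_J-\langle f\rangle_P)\mathbf{1}_J$, the sum over the $2^d$ dyadic children $J$ of $P$, with $\langle f\rangle_Q=|Q|^{-1}\int_Qf$. Fix $\gamma=\alpha/(4\alpha+4d)$. A cube $R\in\mathcal{D}$ is $r$-good if $\operatorname{d}(R,\partial P)>(\ell R)^\gamma(\ell P)^{1-\gamma}$ for every $P\in\mathcal{D}$ with $\ell P\ge 2^r\ell R$. *)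

theory Defs
  imports "HOL-Analysis.Analysis"
begin

definition linf :: "real ^ 'n \<Rightarrow> real" where
  "linf x = Max (range (\<lambda>i. \<bar>x $ i\<bar>))"

definition setdist_inf :: "(real ^ 'n) set \<Rightarrow> (real ^ 'n) set \<Rightarrow> real" where
  "setdist_inf A B = Inf {linf (x - y) | x y. x \<in> A \<and> y \<in> B}"

text \<open>Translation vector sum_{i>j} omega_i 2^{-i} for the grid D^omega
  (omega :: int => 'n => bool encodes an element of ({0,1}^d)^Z;
   omega = (\<lambda>_ _. False) gives the standard grid D^0).\<close>
definition grid_shift :: "(int \<Rightarrow> 'n \<Rightarrow> bool) \<Rightarrow> int \<Rightarrow> real ^ 'n" where
  "grid_shift \<omega> j = (\<Sum>k. (2 powr (- (real_of_int j + 1 + real k))) *\<^sub>R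
                         (\<chi> i. if \<omega> (j + 1 + int k) i then 1 else 0))"

definition dcube :: "(int \<Rightarrow> 'n \<Rightarrow> bool) \<Rightarrow> int \<Rightarrow> int ^ 'n \<Rightarrow> (real ^ 'n) set" where
  "dcube \<omega> j m = {x. \<forall>i. 2 powr (- real_of_int j) * real_of_int (m $ i) + grid_shift \<omega> j $ i \<le> x $ i
                       \<and> x $ i < 2 powr (- real_of_int j) * (real_of_int (m $ i) + 1) + grid_shift \<omega> j $ i}"

definition dchildren :: "(int \<Rightarrow> 'n \<Rightarrow> bool) \<Rightarrow> int \<Rightarrow> int ^ 'n \<Rightarrow> (real ^ 'n) set set" where
  "dchildren \<omega> j m = {dcube \<omega> (j + 1) m' | m'. dcube \<omega> (j + 1) m' \<subseteq> dcube \<omega> j m}"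

definition avg :: "(real ^ 'n) set \<Rightarrow> (real ^ 'n \<Rightarrow> real) \<Rightarrow> real" where
  "avg Q f = integral Q f / measure lebesgue Q"

definition mdiff :: "(int \<Rightarrow> 'n \<Rightarrow> bool) \<Rightarrow> int \<Rightarrow> int ^ 'n \<Rightarrow> (real ^ 'n \<Rightarrow> real) \<Rightarrow> real ^ 'n \<Rightarrow> real" where
  "mdiff \<omega> j m f y = (\<Sum>J\<in>dchildren \<omega> j m. (avg J f - avg (dcube \<omega> j m) f) * indicator J y)"

definition good :: "real \<Rightarrow> nat \<Rightarrow> (int \<Rightarrow> 'n \<Rightarrow> bool) \<Rightarrow> int \<Rightarrow> int ^ 'n \<Rightarrow> bool" where
  "good \<alpha> r \<omega> jR mR \<longleftrightarrow>
     (\<forall>j m. 2 powr (- real_of_int j) \<ge> 2 ^ r * 2 powr (- real_of_int jR) \<longrightarrow>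
        setdist_inf (dcube \<omega> jR mR) (frontier (dcube \<omega> j m))
          > (2 powr (- real_of_int jR)) powr (\<alpha> / (4 * \<alpha> + 4 * CARD('n)))
            * (2 powr (- real_of_int j)) powr (1 - \<alpha> / (4 * \<alpha> + 4 * CARD('n))))"

end

theory Submission
  imports Defs
begin

lemma linf_ge: "\<bar>v $ i\<bar> \<le> linf v"
  unfolding linf_def by (rule Max_ge) auto

lemma linf_le: "(\<And>i. \<bar>v $ i\<bar> \<le> B) \<Longrightarrow> linf v \<le> B"
  unfolding linf_def by (rule Max.boundedI) auto

lemma linf_lt: "(\<And>i. \<bar>v $ i\<bar> < B) \<Longrightarrow> linf v < B"
proof -
  assume a: "\<And>i. \<bar>v $ i\<bar> < B"
  have "linf v \<in> range (\<lambda>i. \<bar>v $ i\<bar>)" unfolding linf_def by (rule Max_in) auto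
  then show ?thesis using a by auto
qed

lemma linf_nonneg: "0 \<le> linf v"
  using linf_ge[of v] abs_ge_zero order_trans by blast

lemma linf_zero: "linf 0 = 0"
  by (intro antisym linf_le linf_nonneg) simp

lemma gs_summable: "summable (\<lambda>k. (2 powr (- (real_of_int j + 1 + real k))) *\<^sub>R
                         ((\<chi> i. if \<omega> (j + 1 + int k) i then 1 else 0) :: real ^ 'n))"
proof (rule summable_comparison_test)
  show "\<exists>N. \<forall>n\<ge>N. norm ((2 powr (- (real_of_int j + 1 + real n))) *\<^sub>R
                         ((\<chi> i. if \<omega> (j + 1 + int n) i then 1 else 0) :: real ^ 'n))
     \<le> (real CARD('n) * 2 powr (- (real_of_int j + 1))) * (1/2) ^ n"
  proof (intro exI allI impI)
    fix n :: nat
    let ?v = "((\<chi> i. if \<omega> (j + 1 + int n) i then 1 else 0) :: real ^ 'n)"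
    have nv: "norm ?v \<le> real CARD('n)"
    proof -
      have "norm ?v \<le> (\<Sum>i\<in>UNIV. \<bar>?v $ i\<bar>)" by (rule norm_le_l1_cart)
      also have "\<dots> \<le> (\<Sum>i\<in>(UNIV::'n set). 1)" by (intro sum_mono) auto
      finally show ?thesis by simp
    qed
    have e: "2 powr (- (real_of_int j + 1 + real n)) = 2 powr (- (real_of_int j + 1)) * (1/2)^n"
    proof -
      have "2 powr (- (real_of_int j + 1 + real n)) = 2 powr (- (real_of_int j + 1)) * 2 powr (- real n)"
        by (subst powr_add[symmetric]) simp
      moreover have "(2::real) powr (- real n) = (1/2)^n"
        by (simp add: powr_minus powr_realpow power_one_over inverse_eq_divide)
      ultimately show ?thesis by simp
    qed
    define c where "c = 2 powr (- (real_of_int j + 1 + real n))"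
    have c: "c > 0" unfolding c_def by simp
    have "norm (c *\<^sub>R ?v) = c * norm ?v" using c by simp
    also have "\<dots> \<le> c * real CARD('n)" using nv c by (intro mult_left_mono) auto
    also have "\<dots> = (real CARD('n) * 2 powr (- (real_of_int j + 1))) * (1/2) ^ n" unfolding c_def e by simp
    finally show "norm (2 powr (- (real_of_int j + 1 + real n)) *\<^sub>R ?v) \<le> (real CARD('n) * 2 powr (- (real_of_int j + 1))) * (1/2) ^ n"
      unfolding c_def .
  qed
  show "summable (\<lambda>n. (real CARD('n) * 2 powr (- (real_of_int j + 1))) * (1/2::real) ^ n)"
    by (intro summable_mult summable_geometric) simp
qed

lemma gs_rec: "grid_shift \<omega> j $ i = 2 powr (- real_of_int j) / 2 * (if \<omega> (j+1) i then 1 else 0) + grid_shift \<omega> (j+1) $ i"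
proof -
  define F where "F = (\<lambda>k::nat. (2 powr (- (real_of_int j + 1 + real k))) *\<^sub>R
                         ((\<chi> i. if \<omega> (j + 1 + int k) i then 1 else 0) :: real ^ 'a))"
  have sF: "summable F" unfolding F_def by (rule gs_summable)
  have g: "grid_shift \<omega> j = suminf F" unfolding F_def grid_shift_def by simp
  have g1: "grid_shift \<omega> (j+1) = (\<Sum>k. F (Suc k))"
    unfolding F_def grid_shift_def by (simp add: algebra_simps)
  have "grid_shift \<omega> j = F 0 + grid_shift \<omega> (j+1)"
    using suminf_split_head[OF sF] g g1 by simp
  moreover have "2 powr (- (real_of_int j + 1)) = 2 powr (- real_of_int j) / 2"
    by (simp add: powr_add[symmetric] diff_conv_add_uminus[symmetric] powr_diff)
  ultimately show ?thesis unfolding F_def by simp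
qed

lemma p2_succ: "(2::real) powr (- real_of_int (j+1)) = 2 powr (- real_of_int j) / 2"
  by (simp add: powr_diff diff_conv_add_uminus[symmetric])

lemma mem_dcube: "x \<in> dcube \<omega> j m \<longleftrightarrow> (\<forall>i. 2 powr (- real_of_int j) * real_of_int (m $ i) + grid_shift \<omega> j $ i \<le> x $ i
                       \<and> x $ i < 2 powr (- real_of_int j) * (real_of_int (m $ i) + 1) + grid_shift \<omega> j $ i)"
  unfolding dcube_def by simp

lemma dcube_corner: "(\<chi> i. 2 powr (- real_of_int j) * real_of_int (m $ i) + grid_shift \<omega> j $ i) \<in> dcube \<omega> j m"
  unfolding mem_dcube by (simp add: algebra_simps)

lemma dcube_cbox: "dcube \<omega> j m \<subseteq> cbox (\<chi> i. 2 powr (- real_of_int j) * real_of_int (m $ i) + grid_shift \<omega> j $ i)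
     (\<chi> i. 2 powr (- real_of_int j) * (real_of_int (m $ i) + 1) + grid_shift \<omega> j $ i)"
  unfolding mem_dcube interval_cart by (auto simp: less_imp_le mem_dcube)

lemma dcube_bounded: "bounded (dcube \<omega> j m)"
  using dcube_cbox bounded_cbox bounded_subset by blast

lemma conv_ineq:
  fixes a b x y u v :: real
  assumes "a \<le> x" "x < b" "a \<le> y" "y < b" "0 \<le> u" "0 \<le> v" "u + v = 1"
  shows "a \<le> u * x + v * y \<and> u * x + v * y < b"
proof
  have "u * a \<le> u * x" "v * a \<le> v * y" using assms by (auto intro: mult_left_mono)
  then have "(u + v) * a \<le> u * x + v * y" by (simp add: distrib_right)
  then show "a \<le> u * x + v * y" using assms by simp
  have "u * x \<le> u * b" "v * y \<le> v * b" using assms by (auto intro: mult_left_mono)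
  moreover have "u * x < u * b \<or> v * y < v * b"
  proof (cases "u = 0")
    case True then have "v = 1" using assms by simp
    then show ?thesis using assms by simp
  next
    case False then have "u > 0" using assms by simp
    then show ?thesis using assms by simp
  qed
  ultimately have "u * x + v * y < (u + v) * b" by (auto simp: distrib_right)
  then show "u * x + v * y < b" using assms by simp
qed

lemma dcube_convex: "convex (dcube \<omega> j m)"
  unfolding convex_def
proof (intro ballI allI impI)
  fix x y and u v :: real
  assume x: "x \<in> dcube \<omega> j m" and y: "y \<in> dcube \<omega> j m" and uv: "0 \<le> u" "0 \<le> v" "u + v = 1"
  show "u *\<^sub>R x + v *\<^sub>R y \<in> dcube \<omega> j m"
    unfolding mem_dcube
  proof
    fix i
    let ?a = "2 powr (- real_of_int j) * real_of_int (m $ i) + grid_shift \<omega> j $ i"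
    let ?b = "2 powr (- real_of_int j) * (real_of_int (m $ i) + 1) + grid_shift \<omega> j $ i"
    have "?a \<le> x $ i" "x $ i < ?b" "?a \<le> y $ i" "y $ i < ?b" using x y unfolding mem_dcube by auto
    from conv_ineq[OF this uv]
    show "?a \<le> (u *\<^sub>R x + v *\<^sub>R y) $ i \<and> (u *\<^sub>R x + v *\<^sub>R y) $ i < ?b"
      by simp
  qed
qed

lemma dcube_lmeasurable: "dcube \<omega> j m \<in> lmeasurable"
  by (intro measurable_convex dcube_convex dcube_bounded)

lemma dcube_same: assumes "x \<in> dcube \<omega> j m1" "x \<in> dcube \<omega> j m2" shows "m1 = m2"
proof -
  have "m1 $ i = m2 $ i" for i
  proof -
    let ?h = "2 powr (- real_of_int j)" and ?s = "grid_shift \<omega> j $ i"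
    have h: "?h > 0" by simp
    have a: "?h * real_of_int (m1 $ i) < ?h * (real_of_int (m2 $ i) + 1)"
         "?h * real_of_int (m2 $ i) < ?h * (real_of_int (m1 $ i) + 1)"
    proof -
      from assms have "?h * real_of_int (m1 $ i) + ?s \<le> x $ i \<and> x $ i < ?h * (real_of_int (m1 $ i) + 1) + ?s"
          "?h * real_of_int (m2 $ i) + ?s \<le> x $ i \<and> x $ i < ?h * (real_of_int (m2 $ i) + 1) + ?s"
        unfolding mem_dcube by blast+
      then show "?h * real_of_int (m1 $ i) < ?h * (real_of_int (m2 $ i) + 1)"
         "?h * real_of_int (m2 $ i) < ?h * (real_of_int (m1 $ i) + 1)" by linarith+
    qed
    then have "real_of_int (m1 $ i) < real_of_int (m2 $ i) + 1" "real_of_int (m2 $ i) < real_of_int (m1 $ i) + 1"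
      using h mult_less_cancel_left_pos by blast+
    then show ?thesis by linarith
  qed
  then show ?thesis by (simp add: vec_eq_iff)
qed


lemma child_arith:
  fixes h s x :: real and m e :: int
  assumes h: "h > 0" and lo: "h * real_of_int m + (h/2 * real_of_int e + s) \<le> x"
    and hi: "x < h * (real_of_int m + 1) + (h/2 * real_of_int e + s)"
  defines "q \<equiv> \<lfloor>(x - s) / (h/2)\<rfloor>"
  shows "h/2 * real_of_int q + s \<le> x" "x < h/2 * (real_of_int q + 1) + s"
    "2*m+e \<le> q" "q \<le> 2*m+e+1"
proof -
  define u where "u = (x - s) / (h/2)"
  have h2: "h/2 > 0" using h by simp
  have xu: "x - s = h/2 * u" unfolding u_def using h by simp
  have "real_of_int q \<le> u" "u < real_of_int q + 1" using floor_correct[of u] unfolding q_def u_def by simp_all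
  then have "h/2 * real_of_int q \<le> h/2 * u" "h/2 * u < h/2 * (real_of_int q + 1)"
    using h2 by (intro mult_left_mono mult_strict_left_mono; simp)+
  then show "h/2 * real_of_int q + s \<le> x" "x < h/2 * (real_of_int q + 1) + s" using xu by linarith+
  have "h/2 * real_of_int (2*m+e) = h * real_of_int m + h/2 * real_of_int e" by (simp add: algebra_simps)
  then have "h/2 * real_of_int (2*m+e) \<le> h/2 * u" using lo xu by linarith
  then have "real_of_int (2*m+e) \<le> u" using h2 by (simp add: mult_le_cancel_left_pos)
  then show "2*m+e \<le> q" unfolding q_def u_def by (simp add: le_floor_iff)
  have "h/2 * real_of_int (2*m+e+2) = h * (real_of_int m + 1) + h/2 * real_of_int e" by (simp add: algebra_simps)
  then have "h/2 * u < h/2 * real_of_int (2*m+e+2)" using hi xu by linarith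
  then have "u < real_of_int (2*m+e+2)" using h2 by (simp add: mult_less_cancel_left_pos)
  then have "q < 2*m+e+2" unfolding q_def u_def by (simp add: floor_less_iff)
  then show "q \<le> 2*m+e+1" by simp
qed

lemma child_sub:
  fixes h s y :: real and m e q :: int
  assumes h: "h > 0" and "2*m+e \<le> q" "q \<le> 2*m+e+1"
    and lo: "h/2 * real_of_int q + s \<le> y" and hi: "y < h/2 * (real_of_int q + 1) + s"
  shows "h * real_of_int m + (h/2 * real_of_int e + s) \<le> y \<and> y < h * (real_of_int m + 1) + (h/2 * real_of_int e + s)"
proof -
  have h2: "h/2 > 0" using h by simp
  have a1: "real_of_int (2*m+e) \<le> real_of_int q" using assms(2) by (simp only: of_int_le_iff)
  have "q + 1 \<le> 2*m+e+2" using assms(3) by simp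
  then have "real_of_int (q+1) \<le> real_of_int (2*m+e+2)" by (simp only: of_int_le_iff)
  then have a2: "real_of_int q + 1 \<le> real_of_int (2*m+e+2)" by simp
  note a = a1 a2
  have F1: "h/2 * real_of_int (2*m+e) \<le> h/2 * real_of_int q"
    using a(1) h2 by (intro mult_left_mono) auto
  have F2: "h/2 * (real_of_int q + 1) \<le> h/2 * real_of_int (2*m+e+2)"
    using a(2) h2 by (intro mult_left_mono) auto
  have E1: "h/2 * real_of_int (2*m+e) = h * real_of_int m + h/2 * real_of_int e" by (simp add: algebra_simps)
  have E2: "h/2 * real_of_int (2*m+e+2) = h * (real_of_int m + 1) + h/2 * real_of_int e" by (simp add: algebra_simps)
  have G1: "h * real_of_int m + (h/2 * real_of_int e + s) \<le> y" using F1 E1 lo by linarith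
  have G2: "y < h * (real_of_int m + 1) + (h/2 * real_of_int e + s)" using F2 E2 hi by linarith
  show ?thesis using G1 G2 by blast
qed

lemma child_sub_inv:
  fixes h s :: real and m e q :: int
  assumes h: "h > 0"
    and lo: "h * real_of_int m + (h/2 * real_of_int e + s) \<le> h/2 * real_of_int q + s"
    and hi: "h/2 * real_of_int q + s < h * (real_of_int m + 1) + (h/2 * real_of_int e + s)"
  shows "2*m+e \<le> q \<and> q \<le> 2*m+e+1"
proof -
  have h2: "h/2 > 0" using h by simp
  have e1: "h/2 * real_of_int (2*m+e) = h * real_of_int m + h/2 * real_of_int e" by (simp add: algebra_simps)
  have e2: "h/2 * real_of_int (2*m+e+2) = h * (real_of_int m + 1) + h/2 * real_of_int e" by (simp add: algebra_simps)
  have "h/2 * real_of_int (2*m+e) \<le> h/2 * real_of_int q" using lo e1 by linarith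
  then have "real_of_int (2*m+e) \<le> real_of_int q" using h2 mult_le_cancel_left_pos by blast
  then have c1: "2*m+e \<le> q" by (simp only: of_int_le_iff)
  have "h/2 * real_of_int q < h/2 * real_of_int (2*m+e+2)" using hi e2 by linarith
  then have "real_of_int q < real_of_int (2*m+e+2)" using h2 mult_less_cancel_left_pos by blast
  then have c2: "q < 2*m+e+2" by (simp only: of_int_less_iff)
  show ?thesis using c1 c2 by simp
qed

definition ee :: "(int \<Rightarrow> 'n \<Rightarrow> bool) \<Rightarrow> int \<Rightarrow> 'n \<Rightarrow> int" where
  "ee \<omega> j i = (if \<omega> (j+1) i then 1 else 0)"

lemma gs_rec': "grid_shift \<omega> j $ i = 2 powr (- real_of_int j) / 2 * real_of_int (ee \<omega> j i) + grid_shift \<omega> (j+1) $ i"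
  unfolding ee_def by (subst gs_rec) simp

lemma mem_dcube_succ: "x \<in> dcube \<omega> (j+1) m \<longleftrightarrow> (\<forall>i. 2 powr (- real_of_int j) / 2 * real_of_int (m $ i) + grid_shift \<omega> (j+1) $ i \<le> x $ i
                       \<and> x $ i < 2 powr (- real_of_int j) / 2 * (real_of_int (m $ i) + 1) + grid_shift \<omega> (j+1) $ i)"
  unfolding mem_dcube p2_succ by simp

lemma mem_dcube': "x \<in> dcube \<omega> j m \<longleftrightarrow> (\<forall>i. 2 powr (- real_of_int j) * real_of_int (m $ i) + (2 powr (- real_of_int j) / 2 * real_of_int (ee \<omega> j i) + grid_shift \<omega> (j+1) $ i) \<le> x $ i
                       \<and> x $ i < 2 powr (- real_of_int j) * (real_of_int (m $ i) + 1) + (2 powr (- real_of_int j) / 2 * real_of_int (ee \<omega> j i) + grid_shift \<omega> (j+1) $ i))"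
  unfolding mem_dcube by (simp only: gs_rec'[of \<omega> j])

lemma child_cover:
  assumes "x \<in> dcube \<omega> j m"
  shows "\<exists>m'. x \<in> dcube \<omega> (j+1) m' \<and> dcube \<omega> (j+1) m' \<subseteq> dcube \<omega> j m"
proof -
  let ?h = "2 powr (- real_of_int j) :: real"
  have h: "?h > 0" by simp
  define m' where "m' = (\<chi> i. \<lfloor>(x $ i - grid_shift \<omega> (j+1) $ i) / (?h/2)\<rfloor>)"
  have A: "?h/2 * real_of_int (m' $ i) + grid_shift \<omega> (j+1) $ i \<le> x $ i"
     "x $ i < ?h/2 * (real_of_int (m' $ i) + 1) + grid_shift \<omega> (j+1) $ i"
     "2*m$i+ee \<omega> j i \<le> m' $ i" "m' $ i \<le> 2*m$i+ee \<omega> j i+1" for i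
  proof -
    have X: "?h * real_of_int (m $ i) + (?h / 2 * real_of_int (ee \<omega> j i) + grid_shift \<omega> (j + 1) $ i) \<le> x $ i"
      "x $ i < ?h * (real_of_int (m $ i) + 1) + (?h / 2 * real_of_int (ee \<omega> j i) + grid_shift \<omega> (j + 1) $ i)"
      using assms unfolding mem_dcube' by blast+
    have mi: "m' $ i = \<lfloor>(x $ i - grid_shift \<omega> (j+1) $ i) / (?h/2)\<rfloor>" unfolding m'_def by simp
    show "?h/2 * real_of_int (m' $ i) + grid_shift \<omega> (j+1) $ i \<le> x $ i"
     "x $ i < ?h/2 * (real_of_int (m' $ i) + 1) + grid_shift \<omega> (j+1) $ i"
     "2*m$i+ee \<omega> j i \<le> m' $ i" "m' $ i \<le> 2*m$i+ee \<omega> j i+1"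
      unfolding mi by (rule child_arith[OF h X])+
  qed
  have "x \<in> dcube \<omega> (j+1) m'" unfolding mem_dcube_succ using A by auto
  moreover have "dcube \<omega> (j+1) m' \<subseteq> dcube \<omega> j m"
  proof
    fix y assume "y \<in> dcube \<omega> (j+1) m'"
    then have Y: "?h/2 * real_of_int (m' $ i) + grid_shift \<omega> (j+1) $ i \<le> y $ i \<and> y $ i < ?h/2 * (real_of_int (m' $ i) + 1) + grid_shift \<omega> (j+1) $ i" for i
      unfolding mem_dcube_succ by blast
    show "y \<in> dcube \<omega> j m"
    proof (unfold mem_dcube', intro allI)
      fix i show "?h * real_of_int (m $ i) + (?h / 2 * real_of_int (ee \<omega> j i) + grid_shift \<omega> (j + 1) $ i) \<le> y $ i \<and>
          y $ i < ?h * (real_of_int (m $ i) + 1) + (?h / 2 * real_of_int (ee \<omega> j i) + grid_shift \<omega> (j + 1) $ i)"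
        using child_sub[OF h A(3)[of i] A(4)[of i]] Y[of i] by blast
    qed
  qed
  ultimately show ?thesis by blast
qed

lemma children_sub: "J \<in> dchildren \<omega> j m \<Longrightarrow> J \<subseteq> dcube \<omega> j m"
  unfolding dchildren_def by auto

lemma children_union: "\<Union>(dchildren \<omega> j m) = dcube \<omega> j m"
proof
  show "\<Union>(dchildren \<omega> j m) \<subseteq> dcube \<omega> j m" using children_sub by blast
  show "dcube \<omega> j m \<subseteq> \<Union>(dchildren \<omega> j m)"
  proof
    fix x assume "x \<in> dcube \<omega> j m"
    from child_cover[OF this] obtain m' where "x \<in> dcube \<omega> (j+1) m'" "dcube \<omega> (j+1) m' \<subseteq> dcube \<omega> j m" by blast
    then show "x \<in> \<Union>(dchildren \<omega> j m)" unfolding dchildren_def by blast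
  qed
qed

lemma children_disj: "J1 \<in> dchildren \<omega> j m \<Longrightarrow> J2 \<in> dchildren \<omega> j m \<Longrightarrow> J1 \<noteq> J2 \<Longrightarrow> J1 \<inter> J2 = {}"
proof -
  assume a: "J1 \<in> dchildren \<omega> j m" "J2 \<in> dchildren \<omega> j m" "J1 \<noteq> J2"
  obtain m1 where m1: "J1 = dcube \<omega> (j+1) m1" using a(1) unfolding dchildren_def by blast
  obtain m2 where m2: "J2 = dcube \<omega> (j+1) m2" using a(2) unfolding dchildren_def by blast
  show "J1 \<inter> J2 = {}"
  proof (rule ccontr)
    assume "J1 \<inter> J2 \<noteq> {}"
    then obtain x where "x \<in> J1" "x \<in> J2" by blast
    then have "m1 = m2" using dcube_same m1 m2 by blast
    then show False using a(3) m1 m2 by simp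
  qed
qed

lemma children_finite: "finite (dchildren \<omega> j m)"
proof -
  let ?h = "2 powr (- real_of_int j) :: real"
  have h: "?h > 0" by simp
  let ?F = "\<lambda>v::'a \<Rightarrow> bool. dcube \<omega> (j+1) (\<chi> i. 2*m$i + ee \<omega> j i + (if v i then 1 else 0))"
  have "dchildren \<omega> j m \<subseteq> ?F ` UNIV"
  proof
    fix J assume "J \<in> dchildren \<omega> j m"
    then obtain m' where J: "J = dcube \<omega> (j+1) m'" "J \<subseteq> dcube \<omega> j m" unfolding dchildren_def by blast
    define c where "c = (\<chi> i. ?h/2 * real_of_int (m' $ i) + grid_shift \<omega> (j+1) $ i)"
    have ci: "c $ i = ?h/2 * real_of_int (m' $ i) + grid_shift \<omega> (j+1) $ i" for i unfolding c_def by simp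
    have "c \<in> dcube \<omega> (j+1) m'"
      unfolding mem_dcube_succ ci
    proof (intro allI conjI order_refl)
      fix i
      have e: "?h/2 * (real_of_int (m' $ i) + 1) = ?h/2 * real_of_int (m' $ i) + ?h/2"
        by (simp only: distrib_left mult_1_right)
      have "?h/2 > 0" using h by simp
      then show "?h/2 * real_of_int (m' $ i) + grid_shift \<omega> (j+1) $ i < ?h/2 * (real_of_int (m' $ i) + 1) + grid_shift \<omega> (j+1) $ i"
        unfolding e by linarith
    qed
    then have cP: "c \<in> dcube \<omega> j m" using J by blast
    have B: "2*m$i+ee \<omega> j i \<le> m' $ i \<and> m' $ i \<le> 2*m$i+ee \<omega> j i+1" for i
    proof -
      have X: "?h * real_of_int (m $ i) + (?h / 2 * real_of_int (ee \<omega> j i) + grid_shift \<omega> (j + 1) $ i) \<le> c $ i"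
        "c $ i < ?h * (real_of_int (m $ i) + 1) + (?h / 2 * real_of_int (ee \<omega> j i) + grid_shift \<omega> (j + 1) $ i)"
        using cP unfolding mem_dcube' by blast+
      show ?thesis by (rule child_sub_inv[OF h X[unfolded ci]])
    qed
    have "m' = (\<chi> i. 2*m$i + ee \<omega> j i + (if m' $ i \<noteq> 2*m$i+ee \<omega> j i then 1 else 0))"
    proof -
      have "m' $ i = 2*m$i + ee \<omega> j i + (if m' $ i \<noteq> 2*m$i+ee \<omega> j i then 1 else 0)" for i
        using B[of i] by auto
      then show ?thesis by (simp add: vec_eq_iff)
    qed
    then have JF: "J = ?F (\<lambda>i. m' $ i \<noteq> 2*m$i+ee \<omega> j i)" using J(1) by simp
    have mem: "?F v0 \<in> ?F ` UNIV" for v0 by (rule rangeI)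
    show "J \<in> ?F ` UNIV" using mem[of "\<lambda>i. m' $ i \<noteq> 2*m$i+ee \<omega> j i"] JF by simp
  qed
  moreover have "finite (?F ` UNIV)" by (rule finite_imageI) (rule finite_class.finite_UNIV)
  ultimately show ?thesis by (rule finite_subset)
qed


lemma children_lmeasurable: "J \<in> dchildren \<omega> j m \<Longrightarrow> J \<in> lmeasurable"
  unfolding dchildren_def using dcube_lmeasurable by blast

lemma mdiff_abs_int: "mdiff \<omega> j m f absolutely_integrable_on UNIV"
proof -
  have "(\<lambda>y. \<Sum>J\<in>dchildren \<omega> j m. (avg J f - avg (dcube \<omega> j m) f) *\<^sub>R (indicator J y :: real)) absolutely_integrable_on UNIV"
  proof (rule absolutely_integrable_sum[where f="\<lambda>J y. (avg J f - avg (dcube \<omega> j m) f) *\<^sub>R indicator J y", OF children_finite])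
    fix J assume "J \<in> dchildren \<omega> j m"
    then have "J \<in> lmeasurable" by (rule children_lmeasurable)
    then have "(indicator J :: real ^ 'a \<Rightarrow> real) integrable_on UNIV" using measurable_integrable by blast
    then have "(indicator J :: real ^ 'a \<Rightarrow> real) absolutely_integrable_on UNIV"
      by (rule nonnegative_absolutely_integrable_1) simp
    then show "(\<lambda>y. (avg J f - avg (dcube \<omega> j m) f) *\<^sub>R (indicator J y :: real)) absolutely_integrable_on UNIV"
      by (rule absolutely_integrable_scaleR_left)
  qed
  then show ?thesis unfolding mdiff_def by simp
qed

lemma mdiff_out: "y \<notin> dcube \<omega> j m \<Longrightarrow> mdiff \<omega> j m f y = 0"
proof -
  assume y: "y \<notin> dcube \<omega> j m"
  have "\<forall>J\<in>dchildren \<omega> j m. (avg J f - avg (dcube \<omega> j m) f) * indicator J y = 0"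
  proof
    fix J assume "J \<in> dchildren \<omega> j m"
    then have "y \<notin> J" using children_sub y by blast
    then show "(avg J f - avg (dcube \<omega> j m) f) * indicator J y = 0" by simp
  qed
  then show ?thesis unfolding mdiff_def by (rule sum.neutral)
qed

lemma avg_measure: "X \<in> lmeasurable \<Longrightarrow> avg X f * measure lebesgue X = integral X f"
proof (cases "measure lebesgue X = 0")
  case True
  assume "X \<in> lmeasurable"
  then have "negligible X" using True negligible_iff_measure0 by blast
  then show ?thesis using True by (simp add: integral_negligible)
next
  case False then show ?thesis unfolding avg_def by simp
qed

lemma abs_int_subset: fixes g :: "real^'n \<Rightarrow> real"
  assumes "g absolutely_integrable_on A" "S \<in> lmeasurable" "S \<subseteq> A"
  shows "g absolutely_integrable_on S"
proof -
  have "S \<in> sets lebesgue" using assms(2) by (simp add: fmeasurableD)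
  show ?thesis using set_integrable_subset[OF assms(1) \<open>S \<in> sets lebesgue\<close> assms(3)] .
qed

lemma sum_children_integral:
  fixes g :: "real^'n \<Rightarrow> real"
  assumes "g absolutely_integrable_on dcube \<omega> j m"
  shows "(\<Sum>J\<in>dchildren \<omega> j m. integral J g) = integral (dcube \<omega> j m) g"
proof -
  have "(g has_integral (\<Sum>J\<in>dchildren \<omega> j m. integral J g)) (\<Union>(dchildren \<omega> j m))"
  proof (rule has_integral_Union[OF children_finite])
    fix S assume S: "S \<in> dchildren \<omega> j m"
    have "g absolutely_integrable_on S"
      by (rule set_integrable_subset[OF assms fmeasurableD[OF children_lmeasurable[OF S]] children_sub[OF S]])
    then have "g integrable_on S" using absolutely_integrable_on_def by blast
    then show "(g has_integral integral S g) S" by (simp add: has_integral_integral)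
  next
    show "pairwise (\<lambda>S S'. negligible (S \<inter> S')) (dchildren \<omega> j m)"
    proof (unfold pairwise_def, intro ballI impI)
      fix S S' assume "S \<in> dchildren \<omega> j m" "S' \<in> dchildren \<omega> j m" "S \<noteq> S'"
      then have "S \<inter> S' = {}" by (rule children_disj)
      then show "negligible (S \<inter> S')" by simp
    qed
  qed
  then show ?thesis unfolding children_union by (simp add: integral_unique)
qed

lemma mdiff_integral_zero:
  fixes f :: "real^'n \<Rightarrow> real"
  assumes f: "f absolutely_integrable_on dcube \<omega> j m"
  shows "integral UNIV (mdiff \<omega> j m f) = 0"
proof -
  let ?J = "dchildren \<omega> j m" and ?P = "dcube \<omega> j m"
  let ?a = "avg ?P f"
  have "integral UNIV (mdiff \<omega> j m f) = (\<Sum>J\<in>?J. integral UNIV (\<lambda>y. (avg J f - ?a) * indicator J y))"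
    unfolding mdiff_def
  proof (rule integral_sum[OF children_finite])
    fix J assume "J \<in> ?J"
    then have "J \<in> lmeasurable" by (rule children_lmeasurable)
    then have "(indicator J :: real ^ 'n \<Rightarrow> real) integrable_on UNIV" using measurable_integrable by blast
    from integrable_cmul[OF this, of "avg J f - ?a"]
    show "(\<lambda>y. (avg J f - ?a) * (indicator J y :: real)) integrable_on UNIV" by simp
  qed
  also have "\<dots> = (\<Sum>J\<in>?J. (avg J f - ?a) * measure lebesgue J)"
  proof (rule sum.cong[OF refl])
    fix J assume "J \<in> ?J"
    then have "J \<in> lmeasurable" by (rule children_lmeasurable)
    then show "integral UNIV (\<lambda>y. (avg J f - ?a) * (indicator J y :: real)) = (avg J f - ?a) * measure lebesgue J"
      by (simp add: lmeasure_integral_UNIV)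
  qed
  also have "\<dots> = (\<Sum>J\<in>?J. integral J f) - ?a * (\<Sum>J\<in>?J. integral J (\<lambda>x. 1::real))"
  proof -
    have "(\<Sum>J\<in>?J. (avg J f - ?a) * measure lebesgue J) = (\<Sum>J\<in>?J. integral J f - ?a * integral J (\<lambda>x. 1::real))"
    proof (rule sum.cong[OF refl])
      fix J assume "J \<in> ?J"
      then have J: "J \<in> lmeasurable" by (rule children_lmeasurable)
      show "(avg J f - ?a) * measure lebesgue J = integral J f - ?a * integral J (\<lambda>x. 1::real)"
        using avg_measure[OF J, of f] lmeasure_integral[OF J] by (simp add: left_diff_distrib)
    qed
    then show ?thesis by (simp add: sum_subtractf sum_distrib_left)
  qed
  also have "(\<Sum>J\<in>?J. integral J f) = integral ?P f" by (rule sum_children_integral[OF f])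
  also have "(\<Sum>J\<in>?J. integral J (\<lambda>x. 1::real)) = integral ?P (\<lambda>x. 1::real)"
  proof (rule sum_children_integral)
    have "(\<lambda>x. 1::real) integrable_on ?P" using dcube_lmeasurable by (rule integrable_on_const)
    then show "(\<lambda>x. 1::real) absolutely_integrable_on ?P"
      by (rule nonnegative_absolutely_integrable_1) simp
  qed
  also have "integral ?P f - ?a * integral ?P (\<lambda>x. 1::real) = 0"
    using avg_measure[OF dcube_lmeasurable, of \<omega> j m f] lmeasure_integral[OF dcube_lmeasurable, of \<omega> j m] by simp
  finally show ?thesis .
qed

lemma int_bound:
  fixes g \<phi> :: "real^'n \<Rightarrow> real"
  assumes g: "g absolutely_integrable_on UNIV" and B: "B \<ge> 0" and b: "\<And>y. g y \<noteq> 0 \<Longrightarrow> \<bar>\<phi> y\<bar> \<le> B"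
  shows "\<bar>integral UNIV (\<lambda>y. \<phi> y * g y)\<bar> \<le> B * integral UNIV (\<lambda>y. \<bar>g y\<bar>)"
proof -
  have ga: "(\<lambda>y. \<bar>g y\<bar>) integrable_on UNIV" using g unfolding absolutely_integrable_on_def by simp
  have nn: "0 \<le> integral UNIV (\<lambda>y. \<bar>g y\<bar>)" using ga by (rule integral_nonneg) simp
  show ?thesis
  proof (cases "(\<lambda>y. \<phi> y * g y) integrable_on UNIV")
    case True
    have "norm (integral UNIV (\<lambda>y. \<phi> y * g y)) \<le> integral UNIV (\<lambda>y. B * \<bar>g y\<bar>)"
    proof (rule integral_norm_bound_integral[OF True])
      show "(\<lambda>y. B * \<bar>g y\<bar>) integrable_on UNIV" using integrable_cmul[OF ga, of B] by simp
      fix y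
      show "norm (\<phi> y * g y) \<le> B * \<bar>g y\<bar>"
      proof (cases "g y = 0")
        case False
        then have "\<bar>\<phi> y\<bar> \<le> B" by (rule b)
        then show ?thesis by (simp add: abs_mult mult_right_mono)
      qed simp
    qed
    then show ?thesis by simp
  next
    case False
    then have "integral UNIV (\<lambda>y. \<phi> y * g y) = 0" by (rule not_integrable_integral)
    then show ?thesis using B nn by simp
  qed
qed

lemma int_bound2:
  fixes g \<phi> :: "real^'n \<Rightarrow> real"
  assumes g: "g absolutely_integrable_on UNIV" and g0: "integral UNIV g = 0" and B: "B \<ge> 0"
    and b: "\<And>y. g y \<noteq> 0 \<Longrightarrow> \<bar>\<phi> y - \<phi> c\<bar> \<le> B"
  shows "\<bar>integral UNIV (\<lambda>y. \<phi> y * g y)\<bar> \<le> B * integral UNIV (\<lambda>y. \<bar>g y\<bar>)"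
proof -
  have gi: "g integrable_on UNIV" using g unfolding absolutely_integrable_on_def by simp
  have ga: "(\<lambda>y. \<bar>g y\<bar>) integrable_on UNIV" using g unfolding absolutely_integrable_on_def by simp
  have nn: "0 \<le> integral UNIV (\<lambda>y. \<bar>g y\<bar>)" using ga by (rule integral_nonneg) simp
  show ?thesis
  proof (cases "(\<lambda>y. \<phi> y * g y) integrable_on UNIV")
    case True
    have gc: "(\<lambda>y. \<phi> c * g y) integrable_on UNIV" using integrable_cmul[OF gi, of "\<phi> c"] by simp
    have "integral UNIV (\<lambda>y. (\<phi> y - \<phi> c) * g y) = integral UNIV (\<lambda>y. \<phi> y * g y - \<phi> c * g y)"
      by (simp add: left_diff_distrib)
    also have "\<dots> = integral UNIV (\<lambda>y. \<phi> y * g y) - integral UNIV (\<lambda>y. \<phi> c * g y)"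
      by (rule integral_diff[OF True gc])
    also have "integral UNIV (\<lambda>y. \<phi> c * g y) = 0" using g0 by simp
    finally have eq: "integral UNIV (\<lambda>y. \<phi> y * g y) = integral UNIV (\<lambda>y. (\<phi> y - \<phi> c) * g y)" by simp
    show ?thesis unfolding eq by (rule int_bound[OF g B b])
  next
    case False
    then have "integral UNIV (\<lambda>y. \<phi> y * g y) = 0" by (rule not_integrable_integral)
    then show ?thesis using B nn by simp
  qed
qed

lemma setdist_le: assumes "x \<in> A" "y \<in> B" shows "setdist_inf A B \<le> linf (x - y)"
  unfolding setdist_inf_def
proof (rule cInf_lower)
  show "linf (x - y) \<in> {linf (x - y) |x y. x \<in> A \<and> y \<in> B}" using assms by blast
  show "bdd_below {linf (x - y) |x y. x \<in> A \<and> y \<in> B}"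
    by (rule bdd_belowI[of _ 0]) (auto simp: linf_nonneg)
qed

lemma setdist_ge: "A \<noteq> {} \<Longrightarrow> B \<noteq> {} \<Longrightarrow> (\<And>x y. x \<in> A \<Longrightarrow> y \<in> B \<Longrightarrow> c \<le> linf (x - y)) \<Longrightarrow> c \<le> setdist_inf A B"
  unfolding setdist_inf_def by (rule cInf_greatest) auto

lemma setdist_nonneg: "A \<noteq> {} \<Longrightarrow> B \<noteq> {} \<Longrightarrow> 0 \<le> setdist_inf A B"
  by (rule setdist_ge) (auto simp: linf_nonneg)

lemma setdist_frontier:
  assumes "R \<inter> P = {}" "R \<noteq> {}" "P \<noteq> {}"
  shows "setdist_inf R (frontier P) \<le> setdist_inf R P"
proof (rule setdist_ge[OF assms(2,3)])
  fix x y assume x: "x \<in> R" and y: "y \<in> P"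
  have "x \<notin> P" using x assms(1) by blast
  have "closed_segment x y \<inter> frontier P \<noteq> {}"
  proof (rule connected_Int_frontier)
    show "connected (closed_segment x y)" by simp
    show "closed_segment x y \<inter> P \<noteq> {}" using y by auto
    show "closed_segment x y - P \<noteq> {}" using \<open>x \<notin> P\<close> by auto
  qed
  then obtain z where z: "z \<in> closed_segment x y" "z \<in> frontier P" by blast
  then obtain u where u: "0 \<le> u" "u \<le> 1" "z = (1 - u) *\<^sub>R x + u *\<^sub>R y" unfolding in_segment by blast
  have "linf (x - z) \<le> linf (x - y)"
  proof (rule linf_le)
    fix i
    have "z $ i = (1 - u) * x $ i + u * y $ i" using u(3) by simp
    then have "(x - z) $ i = u * (x $ i - y $ i)" by (simp add: algebra_simps)
    then have "\<bar>(x - z) $ i\<bar> = u * \<bar>x $ i - y $ i\<bar>" using u by (simp add: abs_mult)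
    also have "\<dots> \<le> \<bar>x $ i - y $ i\<bar>" using u by (simp add: mult_left_le_one_le)
    also have "\<dots> \<le> linf (x - y)" using linf_ge[of "x - y" i] by simp
    finally show "\<bar>(x - z) $ i\<bar> \<le> linf (x - y)" .
  qed
  moreover have "setdist_inf R (frontier P) \<le> linf (x - z)" by (rule setdist_le[OF x z(2)])
  ultimately show "setdist_inf R (frontier P) \<le> linf (x - y)" by simp
qed


lemma final_bound:
  fixes C a E D M N S \<alpha> :: real
  assumes "0 < E" "0 < D" "D \<le> M * E" "0 \<le> a" "a \<le> S powr \<alpha>" "0 < C" "0 < N" "1 \<le> M"
  shows "C * a * E powr (- N) \<le> C * M powr N * S powr \<alpha> / D powr N"
proof -
  have "D powr N \<le> (M * E) powr N" using assms by (intro powr_mono2) auto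
  also have "\<dots> = M powr N * E powr N" using assms by (simp add: powr_mult)
  finally have DN: "D powr N \<le> M powr N * E powr N" .
  have "E powr (- N) = 1 / E powr N" by (simp add: powr_minus divide_inverse)
  also have "\<dots> \<le> M powr N / D powr N"
    using DN assms by (simp add: divide_simps mult.commute)
  finally have e: "E powr (- N) \<le> M powr N / D powr N" .
  have "C * a * E powr (- N) \<le> C * S powr \<alpha> * (M powr N / D powr N)"
    using assms e by (intro mult_mono) auto
  then show ?thesis by (simp add: mult_ac)
qed

lemma final_bound2:
  fixes C E D M N lR lP \<delta> \<alpha> \<gamma> :: real
  assumes pos: "0 < lR" "lR \<le> lP" "0 < C" "0 < N" "3 \<le> M" "0 \<le> \<alpha>"
    and g: "\<gamma> * N = \<alpha> / 4" "0 \<le> \<gamma>" "\<gamma> \<le> 1"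
    and d: "lR powr \<gamma> * lP powr (1 - \<gamma>) < \<delta>" "\<delta> \<le> E" "0 < D" "D \<le> 3 * lP"
  shows "C * lR powr \<alpha> * E powr (- N) \<le> C * M powr N * (sqrt (lR * lP)) powr \<alpha> / D powr N"
proof -
  have lP: "0 < lP" using pos by simp
  have b0: "0 < lR powr \<gamma> * lP powr (1 - \<gamma>)" using pos lP by simp
  have "E powr (- N) \<le> (lR powr \<gamma> * lP powr (1 - \<gamma>)) powr (- N)"
    using d b0 pos by (intro powr_mono2') auto
  also have "\<dots> = lR powr (- (\<alpha>/4)) * lP powr (\<alpha>/4 - N)"
  proof -
    have "(lR powr \<gamma> * lP powr (1 - \<gamma>)) powr (- N) = lR powr (\<gamma> * - N) * lP powr ((1 - \<gamma>) * - N)"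
      using pos lP by (simp add: powr_mult powr_powr)
    also have "\<gamma> * - N = - (\<alpha>/4)" using g by simp
    also have "(1 - \<gamma>) * - N = \<alpha>/4 - N" using g by (simp add: algebra_simps)
    finally show ?thesis .
  qed
  finally have e1: "E powr (- N) \<le> lR powr (- (\<alpha>/4)) * lP powr (\<alpha>/4 - N)" .
  have "C * lR powr \<alpha> * E powr (- N) \<le> C * lR powr \<alpha> * (lR powr (- (\<alpha>/4)) * lP powr (\<alpha>/4 - N))"
    using e1 pos by (intro mult_left_mono) auto
  also have "\<dots> = C * (lR powr (\<alpha>/2) * lR powr (\<alpha>/4)) * (lP powr (\<alpha>/4 - N))"
    using pos by (simp add: powr_add[symmetric])
  also have "\<dots> \<le> C * (lR powr (\<alpha>/2) * lP powr (\<alpha>/4)) * (lP powr (\<alpha>/4 - N))"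
    using pos lP by (intro mult_right_mono mult_left_mono powr_mono2) auto
  also have "\<dots> = C * (lR powr (\<alpha>/2) * lP powr (\<alpha>/2)) * lP powr (- N)"
    using lP by (simp add: powr_add[symmetric] mult.assoc)
  also have "lR powr (\<alpha>/2) * lP powr (\<alpha>/2) = (sqrt (lR * lP)) powr \<alpha>"
    using pos lP by (simp add: powr_half_sqrt[symmetric] powr_powr powr_mult)
  also have "lP powr (- N) \<le> M powr N / D powr N"
  proof -
    have "D powr N \<le> (3 * lP) powr N" using d pos by (intro powr_mono2) auto
    also have "\<dots> \<le> (M * lP) powr N" using pos lP by (intro powr_mono2) auto
    also have "\<dots> = M powr N * lP powr N" using pos lP by (simp add: powr_mult)
    finally have DN: "D powr N \<le> M powr N * lP powr N" .
    have "lP powr (- N) = 1 / lP powr N" by (simp add: powr_minus divide_inverse)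
    also have "\<dots> \<le> M powr N / D powr N"
      using DN d lP by (simp add: divide_simps mult.commute)
    finally show ?thesis .
  qed
  then have "C * (sqrt (lR * lP)) powr \<alpha> * lP powr (- N) \<le> C * (sqrt (lR * lP)) powr \<alpha> * (M powr N / D powr N)"
    using pos by (intro mult_left_mono) auto
  finally show ?thesis by (simp add: mult_ac)
qed


theorem lemma4p2:
  fixes C \<alpha> :: real and r :: nat
  assumes "C > 0" and "0 < \<alpha>" and "\<alpha> \<le> 1"
  shows "\<exists>K::real. \<forall>(k :: real \<Rightarrow> real ^ 'n \<Rightarrow> real ^ 'n \<Rightarrow> real)
            (\<omega> :: int \<Rightarrow> 'n \<Rightarrow> bool) jP mP jR mR (f :: real ^ 'n \<Rightarrow> real) x t.
     (\<forall>t>0. \<forall>x y. \<bar>k t x y\<bar> \<le> C * t powr \<alpha> * (t + linf (x - y)) powr (- \<alpha> - real CARD('n))) \<and>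
     (\<forall>t>0. \<forall>x y x' y'. linf (x - x') + linf (y - y') < t \<longrightarrow>
        \<bar>k t x y - k t x' y'\<bar> \<le> C * (linf (x - x') powr \<alpha> + linf (y - y') powr \<alpha>)
                                  * (t + linf (x - y)) powr (- \<alpha> - real CARD('n))) \<and>
     good \<alpha> r \<omega> jR mR \<and>
     ((2 powr (- real_of_int jP) \<ge> 2 powr (- real_of_int jR) \<and> dcube \<omega> jP mP \<inter> dcube \<omega> jR mR = {})
       \<or> 2 powr (- real_of_int jP) < 2 powr (- real_of_int jR)) \<and>
     (\<forall>S. compact S \<longrightarrow> f absolutely_integrable_on S) \<and>
     x \<in> dcube \<omega> jR mR \<and> 2 powr (- real_of_int jR) / 2 \<le> t \<and> t < 2 powr (- real_of_int jR)
     \<longrightarrow> \<bar>integral UNIV (\<lambda>y. k t x y * mdiff \<omega> jP mP f y)\<bar>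
         \<le> K * (sqrt (2 powr (- real_of_int jR) * 2 powr (- real_of_int jP))) powr \<alpha>
             / (2 powr (- real_of_int jR) + setdist_inf (dcube \<omega> jR mR) (dcube \<omega> jP mP)
                + 2 powr (- real_of_int jP)) powr (\<alpha> + real CARD('n))
             * integral UNIV (\<lambda>y. \<bar>mdiff \<omega> jP mP f y\<bar>)"
proof -
  define d where "d = real CARD('n)"
  define N where "N = \<alpha> + d"
  define M :: real where "M = 4 + 2^(r+1)"
  define K where "K = C * M powr N"
  have dpos: "d > 0" unfolding d_def by simp
  have Npos: "N > 0" unfolding N_def using assms dpos by simp
  have M4: "M \<ge> 4" unfolding M_def by simp
  have Cpos: "C > 0" using assms by simp
  have apos: "\<alpha> \<ge> 0" using assms by simp
  show ?thesis
  proof (intro exI[of _ K] allI impI, elim conjE)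
    fix k :: "real \<Rightarrow> real ^ 'n \<Rightarrow> real ^ 'n \<Rightarrow> real" and \<omega> :: "int \<Rightarrow> 'n \<Rightarrow> bool"
      and jP jR :: int and mP mR :: "int ^ 'n" and f :: "real ^ 'n \<Rightarrow> real" and x :: "real ^ 'n" and t :: real
    assume size: "\<forall>t>0. \<forall>x y. \<bar>k t x y\<bar> \<le> C * t powr \<alpha> * (t + linf (x - y)) powr (- \<alpha> - real CARD('n))"
      and smooth: "\<forall>t>0. \<forall>x y x' y'. linf (x - x') + linf (y - y') < t \<longrightarrow>
        \<bar>k t x y - k t x' y'\<bar> \<le> C * (linf (x - x') powr \<alpha> + linf (y - y') powr \<alpha>)
                                  * (t + linf (x - y)) powr (- \<alpha> - real CARD('n))"
      and good: "good \<alpha> r \<omega> jR mR"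
      and cases: "(2 powr (- real_of_int jP) \<ge> 2 powr (- real_of_int jR) \<and> dcube \<omega> jP mP \<inter> dcube \<omega> jR mR = {})
       \<or> 2 powr (- real_of_int jP) < 2 powr (- real_of_int jR)"
      and fint: "\<forall>S. compact S \<longrightarrow> f absolutely_integrable_on S"
      and xR: "x \<in> dcube \<omega> jR mR" and t1: "2 powr (- real_of_int jR) / 2 \<le> t" and t2: "t < 2 powr (- real_of_int jR)"
    define lR :: real where "lR = 2 powr (- real_of_int jR)"
    define lP :: real where "lP = 2 powr (- real_of_int jP)"
    define R where "R = dcube \<omega> jR mR"
    define P where "P = dcube \<omega> jP mP"
    define \<delta> where "\<delta> = setdist_inf R P"
    define D where "D = lR + \<delta> + lP"
    define S where "S = sqrt (lR * lP)"
    define E where "E = lR / 2 + \<delta>"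
    define g where "g = mdiff \<omega> jP mP f"
    have lRpos: "lR > 0" and lPpos: "lP > 0" unfolding lR_def lP_def by simp_all
    have "lR / 2 \<le> t" using t1 unfolding lR_def .
    then have tpos: "t > 0" using lRpos by linarith
    have tlR: "t \<le> lR" using t2 unfolding lR_def by simp
    have Rne: "R \<noteq> {}" using xR unfolding R_def by blast
    have Pne: "P \<noteq> {}" using dcube_corner[of jP mP \<omega>] unfolding P_def by blast
    have dnn: "\<delta> \<ge> 0" unfolding \<delta>_def by (rule setdist_nonneg[OF Rne Pne])
    have Dpos: "D > 0" unfolding D_def using lRpos lPpos dnn by simp
    have Epos: "E > 0" unfolding E_def using lRpos dnn by simp
    have gP: "g y \<noteq> 0 \<Longrightarrow> y \<in> P" for y unfolding g_def P_def using mdiff_out by blast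
    have tE: "y \<in> P \<Longrightarrow> (t + linf (x - y)) powr (- \<alpha> - real CARD('n)) \<le> E powr (- N)" for y
    proof -
      assume y: "y \<in> P"
      have "\<delta> \<le> linf (x - y)" unfolding \<delta>_def using setdist_le[OF xR[folded R_def] y] .
      then have "E \<le> t + linf (x - y)" unfolding E_def using t1 unfolding lR_def by simp
      then have "(t + linf (x - y)) powr (- N) \<le> E powr (- N)"
        using Epos Npos by (intro powr_mono2') auto
      moreover have "- \<alpha> - real CARD('n) = - N" unfolding N_def d_def by simp
      ultimately show ?thesis by simp
    qed
    have Bnn: "K * S powr \<alpha> / D powr N \<ge> 0" unfolding K_def using Cpos M4 by simp
    have gabs: "g absolutely_integrable_on UNIV" unfolding g_def by (rule mdiff_abs_int)
    have goal: "\<bar>integral UNIV (\<lambda>y. k t x y * g y)\<bar> \<le> K * S powr \<alpha> / D powr N * integral UNIV (\<lambda>y. \<bar>g y\<bar>)"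
    proof (cases "lP < lR")
      case True
      then have "jR < jP" unfolding lR_def lP_def by simp
      then have "real_of_int jR + 1 \<le> real_of_int jP" by simp
      then have "lP \<le> 2 powr (- real_of_int (jR + 1))" unfolding lP_def by (intro powr_mono) auto
      then have lP2: "lP \<le> lR / 2" unfolding lR_def p2_succ .
      have fabsP: "f absolutely_integrable_on P"
        unfolding P_def by (rule abs_int_subset[OF fint[rule_format, OF compact_cbox] dcube_lmeasurable dcube_cbox])
      have g0: "integral UNIV g = 0" unfolding g_def by (rule mdiff_integral_zero[OF fabsP[unfolded P_def]])
      define c where "c = (\<chi> i. lP * real_of_int (mP $ i) + grid_shift \<omega> jP $ i)"
      have LS: "lP \<le> S"
      proof -
        have "lP * lP \<le> lR * lP" using True lPpos by (intro mult_right_mono) auto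
        then have "sqrt (lP * lP) \<le> S" unfolding S_def by (rule real_sqrt_le_mono)
        moreover have "sqrt (lP * lP) = lP" using lPpos by simp
        ultimately show ?thesis by simp
      qed
      have DE: "D \<le> M * E"
      proof -
        have "D \<le> 4 * E" unfolding D_def E_def using lP2 dnn lPpos by simp
        also have "4 * E \<le> M * E" using M4 Epos by (intro mult_right_mono) auto
        finally show ?thesis .
      qed
      have pt: "\<bar>k t x y - k t x c\<bar> \<le> K * S powr \<alpha> / D powr N" if gy: "g y \<noteq> 0" for y
      proof -
        from gy have y: "y \<in> P" by (rule gP)
        have yc: "linf (y - c) < lP"
        proof (rule linf_lt)
          fix i
          have "lP * real_of_int (mP $ i) + grid_shift \<omega> jP $ i \<le> y $ i \<and> y $ i < lP * (real_of_int (mP $ i) + 1) + grid_shift \<omega> jP $ i"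
            using y unfolding P_def mem_dcube lP_def by blast
          moreover have "lP * (real_of_int (mP $ i) + 1) = lP * real_of_int (mP $ i) + lP" by (simp add: distrib_left)
          ultimately show "\<bar>(y - c) $ i\<bar> < lP" unfolding c_def by simp
        qed
        have lt: "linf (x - x) + linf (y - c) < t" using yc lP2 \<open>lR / 2 \<le> t\<close> by (simp add: linf_zero)
        have "\<bar>k t x y - k t x c\<bar> \<le> C * (linf (x - x) powr \<alpha> + linf (y - c) powr \<alpha>) * (t + linf (x - y)) powr (- \<alpha> - real CARD('n))"
          using smooth tpos lt by blast
        also have "\<dots> = C * linf (y - c) powr \<alpha> * (t + linf (x - y)) powr (- \<alpha> - real CARD('n))" by (simp add: linf_zero)
        also have "\<dots> \<le> C * lP powr \<alpha> * E powr (- N)"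
          using tE[OF y] yc Cpos apos by (intro mult_mono powr_mono2) (auto simp: linf_nonneg)
        also have "\<dots> \<le> K * S powr \<alpha> / D powr N" unfolding K_def
          using LS lPpos apos M4 by (intro final_bound[OF Epos Dpos DE _ _ Cpos Npos]) (auto intro: powr_mono2)
        finally show ?thesis .
      qed
      show ?thesis by (rule int_bound2[where \<phi>="k t x" and c=c, OF gabs g0 Bnn pt])
    next
      case False
      then have lRP: "lR \<le> lP" by simp
      have disj: "R \<inter> P = {}" using cases False unfolding R_def P_def lR_def lP_def by blast
      have LS: "lR \<le> S"
      proof -
        have "lR * lR \<le> lR * lP" using lRP lRpos by (intro mult_left_mono) auto
        then have "sqrt (lR * lR) \<le> S" unfolding S_def by (rule real_sqrt_le_mono)
        moreover have "sqrt (lR * lR) = lR" using lRpos by simp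
        ultimately show ?thesis by simp
      qed
      have pt: "\<bar>k t x y\<bar> \<le> K * S powr \<alpha> / D powr N" if gy: "g y \<noteq> 0" for y
      proof -
        from gy have y: "y \<in> P" by (rule gP)
        have "\<bar>k t x y\<bar> \<le> C * t powr \<alpha> * (t + linf (x - y)) powr (- \<alpha> - real CARD('n))"
          using size tpos by blast
        also have "\<dots> \<le> C * lR powr \<alpha> * E powr (- N)"
          using tE[OF y] tlR tpos Cpos apos by (intro mult_mono powr_mono2) auto
        also have "\<dots> \<le> K * S powr \<alpha> / D powr N"
        proof (cases "lP < 2^r * lR \<or> lP \<le> \<delta>")
          case True
          have DE: "D \<le> M * E"
          proof (cases "lP < 2^r * lR")
            case True
            have ME: "M * E = 2 * lR + 2^r * lR + M * \<delta>" unfolding M_def E_def by (simp add: algebra_simps)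
            have "\<delta> \<le> M * \<delta>" using M4 dnn by (simp add: mult_le_cancel_right1)
            then show ?thesis unfolding D_def ME using True lRpos by simp
          next
            case False
            then have "lP \<le> \<delta>" using \<open>lP < 2^r * lR \<or> lP \<le> \<delta>\<close> by simp
            then have "D \<le> 4 * E" unfolding D_def E_def using lRpos dnn by simp
            also have "4 * E \<le> M * E" using M4 Epos by (intro mult_right_mono) auto
            finally show ?thesis .
          qed
          show ?thesis unfolding K_def
            using LS lRpos apos M4 by (intro final_bound[OF Epos Dpos DE _ _ Cpos Npos]) (auto intro: powr_mono2)
        next
          case False
          then have big: "2^r * lR \<le> lP" and dl: "\<delta> < lP" by auto
          define \<gamma> where "\<gamma> = \<alpha> / (4 * \<alpha> + 4 * real CARD('n))"
          have "setdist_inf (dcube \<omega> jR mR) (frontier (dcube \<omega> jP mP))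
              > (2 powr (- real_of_int jR)) powr (\<alpha> / (4 * \<alpha> + 4 * CARD('n)))
                * (2 powr (- real_of_int jP)) powr (1 - \<alpha> / (4 * \<alpha> + 4 * CARD('n)))"
            using good big unfolding good_def lR_def lP_def by blast
          then have gd: "lR powr \<gamma> * lP powr (1 - \<gamma>) < setdist_inf R (frontier P)"
            unfolding \<gamma>_def lR_def lP_def R_def P_def by simp
          have "setdist_inf R (frontier P) \<le> \<delta>" unfolding \<delta>_def by (rule setdist_frontier[OF disj Rne Pne])
          with gd have gd': "lR powr \<gamma> * lP powr (1 - \<gamma>) < \<delta>" by simp
          have den: "4 * \<alpha> + 4 * real CARD('n) > 0" using apos dpos unfolding d_def by linarith
          have gN: "\<gamma> * N = \<alpha> / 4" unfolding \<gamma>_def N_def d_def using den by (simp add: field_simps)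
          have g0: "0 \<le> \<gamma>" unfolding \<gamma>_def using den apos by simp
          have g1: "\<gamma> \<le> 1" unfolding \<gamma>_def using den apos by (simp add: divide_le_eq)
          have dE: "\<delta> \<le> E" unfolding E_def using lRpos by simp
          have D3: "D \<le> 3 * lP" unfolding D_def using dl lRP by simp
          have M3: "3 \<le> M" using M4 by simp
          show ?thesis unfolding K_def S_def
            by (rule final_bound2[OF lRpos lRP Cpos Npos M3 apos gN g0 g1 gd' dE Dpos D3])
        qed
        finally show ?thesis .
      qed
      show ?thesis by (rule int_bound[where \<phi>="k t x", OF gabs Bnn pt])
    qed
    show "\<bar>integral UNIV (\<lambda>y. k t x y * mdiff \<omega> jP mP f y)\<bar>
         \<le> K * (sqrt (2 powr (- real_of_int jR) * 2 powr (- real_of_int jP))) powr \<alpha>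
             / (2 powr (- real_of_int jR) + setdist_inf (dcube \<omega> jR mR) (dcube \<omega> jP mP)
                + 2 powr (- real_of_int jP)) powr (\<alpha> + real CARD('n))
             * integral UNIV (\<lambda>y. \<bar>mdiff \<omega> jP mP f y\<bar>)"
      using goal unfolding g_def S_def D_def lR_def lP_def \<delta>_def R_def P_def N_def d_def .
  qed
qed


end
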